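(* Assume $\frac1{\alpha^2}\ge\frac45+\mu$ for a constant $\mu>0$. There is $a_0>0$ depending only on $S$ and $\mu$ such that for all $0<a\le\min(a_0,\lambda/2)$ there is a constant $c'$ depending only on $a$ and $\mu$ with the following property. For every $t\ge0$, if $x^s_{N/4}(t)<0$ and $$\mathbb E\left[\Psi(x^s(t+1))-\Psi(x^s(t))\,\middle|\,x^s(t)\right]\ge-\frac{a}{60N}\Psi(x^s(t)),$$ then either $\Psi(x^s(t))<\frac\mu6\Phi(x^s(t))$ or $\Gamma(x^s(t))<c'N$.
   Context: Weighted balls into weighted bins: $n$ bins with positive integer weights $N_1,\dots,N_n$, $N=\sum_iN_i$; $\mathcal D$ on $[n]$ is $(\alpha,\beta)$-biased, i.e. $\frac{N_i}{\alpha N}\le\Pr_{\mathcal D}[i]\le\frac{\beta N_i}{N}$, $\alpha,\beta\ge1$. Ball weights $w(t)$ are i.i.d. from $\mathcal W$ on $[0,\infty)$ with $\mathbb E[\mathcal W]=1$ and $M(z)=\mathbb E[e^{z\mathcal W}]$ finite at $z=\lambda$ for some $\lambda>0$; $S\ge1$ is a constant with $M''(z)\le2S$ for all $|z|<\lambda/2$. Each round two bins are sampled independently from $\mathcal D$ and the ball goes to the sampled bin with smaller value $v_i(t-1)=w_i(t-1)/N_i$. Slot formulation: bin $i$ consists of $N_i$ unit slots; the normalized slot vector $x^s(t)\in\mathbb R^N$ has, for each slot of bin $i$, the entry $v_i(t)-\frac1N\sum_{t'\le t}w(t')$, indexed so that $x^s_1(t)\ge\dots\ge x^s_N(t)$;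 fractional indices are rounded up. $\Phi(y)=\sum_je^{ay_j}$, $\Psi(y)=\sum_je^{-ay_j}$, $\Gamma=\Phi+\Psi$. *)

theory Defs
  imports "HOL-Probability.Probability"
begin

text \<open>Bins are indexed 0..n-1; bin i has positive integer weight Ns i;
  the state of the process at time t is the load vector w (w i = w_i(t)).\<close>

definition totN :: "nat \<Rightarrow> (nat \<Rightarrow> nat) \<Rightarrow> nat" where
  "totN n Ns = (\<Sum>i<n. Ns i)"

definition bin_val :: "(nat \<Rightarrow> nat) \<Rightarrow> (nat \<Rightarrow> real) \<Rightarrow> nat \<Rightarrow> real" where
  "bin_val Ns w i = w i / real (Ns i)"

text \<open>normalised slot vector x^s, sorted non-increasingly (as a list, 0-indexed)\<close>
definition slot_vec :: "nat \<Rightarrow> (nat \<Rightarrow> nat) \<Rightarrow> (nat \<Rightarrow> real) \<Rightarrow> real list" where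
  "slot_vec n Ns w =
     rev (sort (concat (map (\<lambda>i. replicate (Ns i)
        (bin_val Ns w i - (\<Sum>k<n. w k) / real (totN n Ns))) [0..<n])))"

text \<open>x^s_k for a real index k \<ge> 0 (1-indexed, fractional indices rounded up)\<close>
definition slot_at :: "nat \<Rightarrow> (nat \<Rightarrow> nat) \<Rightarrow> (nat \<Rightarrow> real) \<Rightarrow> real \<Rightarrow> real" where
  "slot_at n Ns w k = slot_vec n Ns w ! (nat \<lceil>k\<rceil> - 1)"

definition Phi :: "real \<Rightarrow> real list \<Rightarrow> real" where
  "Phi a y = sum_list (map (\<lambda>z. exp (a * z)) y)"

definition Psi :: "real \<Rightarrow> real list \<Rightarrow> real" where
  "Psi a y = sum_list (map (\<lambda>z. exp (- a * z)) y)"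

definition Gamma :: "real \<Rightarrow> real list \<Rightarrow> real" where
  "Gamma a y = Phi a y + Psi a y"

definition biased :: "nat \<Rightarrow> (nat \<Rightarrow> nat) \<Rightarrow> nat pmf \<Rightarrow> real \<Rightarrow> real \<Rightarrow> bool" where
  "biased n Ns D \<alpha> \<beta> \<longleftrightarrow> set_pmf D \<subseteq> {..<n} \<and>
     (\<forall>i<n. real (Ns i) / (\<alpha> * real (totN n Ns)) \<le> pmf D i \<and>
            pmf D i \<le> \<beta> * real (Ns i) / real (totN n Ns))"

definition mgf :: "real measure \<Rightarrow> real \<Rightarrow> real" where
  "mgf W z = (\<integral>x. exp (z * x) \<partial>W)"

definition weight_dist :: "real measure \<Rightarrow> real \<Rightarrow> real \<Rightarrow> bool" where
  "weight_dist W lam S \<longleftrightarrow> prob_space W \<and> sets W = sets borel \<and>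
     (AE x in W. 0 \<le> x) \<and> integrable W (\<lambda>x. x) \<and> (\<integral>x. x \<partial>W) = 1 \<and>
     0 < lam \<and> integrable W (\<lambda>x. exp (lam * x)) \<and> 1 \<le> S \<and>
     (\<forall>z. \<bar>z\<bar> < lam / 2 \<longrightarrow> deriv (deriv (mgf W)) z \<le> 2 * S)"

text \<open>Tie-breaking (possibly randomised): p i j is the probability that the
  ball goes to i when the pair (i,j) is sampled; the smaller value always wins.\<close>
definition tie_rule :: "nat \<Rightarrow> (nat \<Rightarrow> nat) \<Rightarrow> (nat \<Rightarrow> real) \<Rightarrow> (nat \<Rightarrow> nat \<Rightarrow> real) \<Rightarrow> bool" where
  "tie_rule n Ns w p \<longleftrightarrow> (\<forall>i<n. \<forall>j<n. 0 \<le> p i j \<and> p i j \<le> 1 \<and>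
     (bin_val Ns w i < bin_val Ns w j \<longrightarrow> p i j = 1) \<and>
     (bin_val Ns w j < bin_val Ns w i \<longrightarrow> p i j = 0))"

text \<open>E[ Psi(x^s(t+1)) | state w at time t ] for one round of the two-choice process\<close>
definition exp_next_Psi ::
  "real \<Rightarrow> nat \<Rightarrow> (nat \<Rightarrow> nat) \<Rightarrow> nat pmf \<Rightarrow> real measure \<Rightarrow> (nat \<Rightarrow> nat \<Rightarrow> real)
    \<Rightarrow> (nat \<Rightarrow> real) \<Rightarrow> real" where
  "exp_next_Psi a n Ns D W p w =
     (\<Sum>i<n. \<Sum>j<n. pmf D i * pmf D j *
        (p i j * (\<integral>\<omega>. Psi a (slot_vec n Ns (w(i := w i + \<omega>))) \<partial>W) +
         (1 - p i j) * (\<integral>\<omega>. Psi a (slot_vec n Ns (w(j := w j + \<omega>))) \<partial>W)))"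

end

theory Submission
  imports Defs
begin


lemma exp_taylor2: "\<bar>exp (t::real) - 1 - t\<bar> \<le> t\<^sup>2 * exp \<bar>t\<bar> / 2"
proof -
  obtain s where s: "\<bar>s\<bar> \<le> \<bar>t\<bar>" "exp t = (\<Sum>m<2. t ^ m / fact m) + exp s / fact 2 * t ^ 2"
    using Maclaurin_exp_le[of t 2] by blast
  have e: "exp t - 1 - t = exp s / 2 * t\<^sup>2" using s(2) by (simp add: eval_nat_numeral)
  have "exp s \<le> exp \<bar>t\<bar>" using s(1) by simp
  then have "exp s / 2 * t\<^sup>2 \<le> t\<^sup>2 * exp \<bar>t\<bar> / 2" by (simp add: mult_right_mono mult.commute)
  moreover have "\<bar>exp t - 1 - t\<bar> = exp s / 2 * t\<^sup>2" unfolding e by simp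
  ultimately show ?thesis by linarith
qed

lemma pow_le_exp: assumes "0 \<le> (t::real)" shows "t ^ k \<le> fact k * exp t"
proof -
  obtain s where s: "\<bar>s\<bar> \<le> \<bar>t\<bar>" "exp t = (\<Sum>m<Suc k. t ^ m / fact m) + exp s / fact (Suc k) * t ^ (Suc k)"
    using Maclaurin_exp_le[of t "Suc k"] by blast
  have "t ^ k / fact k \<le> (\<Sum>m<Suc k. t ^ m / fact m)"
    by (rule member_le_sum) (use assms in auto)
  also have "\<dots> \<le> exp t" using s(2) assms by simp
  finally show ?thesis by (simp add: field_simps)
qed

lemma DERIV_integral_bound:
  fixes W :: "real measure" and g :: "real \<Rightarrow> real \<Rightarrow> real"
  assumes ig: "integrable W (g z)" and ig': "integrable W g'" and iB: "integrable W B" and eta: "0 < \<eta>"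
    and near: "\<And>h. \<bar>h\<bar> < \<eta> \<Longrightarrow> integrable W (g (z+h)) \<and>
        (AE x in W. \<bar>g (z+h) x - g z x - h * g' x\<bar> \<le> h\<^sup>2 * B x)"
  shows "((\<lambda>z. \<integral>x. g z x \<partial>W) has_field_derivative (\<integral>x. g' x \<partial>W)) (at z)"
proof -
  let ?F = "\<lambda>z. \<integral>x. g z x \<partial>W"
  let ?D = "\<integral>x. g' x \<partial>W"
  define K where "K = (\<integral>x. B x \<partial>W)"
  have bnd: "\<bar>?F (z+h) - ?F z - h * ?D\<bar> \<le> h\<^sup>2 * K" if "\<bar>h\<bar> < \<eta>" for h
  proof -
    from near[OF that] have i: "integrable W (g (z+h))"
      and ae: "AE x in W. \<bar>g (z+h) x - g z x - h * g' x\<bar> \<le> h\<^sup>2 * B x" by auto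
    have i2: "integrable W (\<lambda>x. g (z+h) x - g z x - h * g' x)" using i ig ig' by auto
    have "(\<integral>x. g (z+h) x - g z x - h * g' x \<partial>W) = (\<integral>x. g (z+h) x - g z x \<partial>W) - (\<integral>x. h * g' x \<partial>W)"
      by (rule Bochner_Integration.integral_diff) (use i ig ig' in auto)
    also have "\<dots> = ?F (z+h) - ?F z - h * ?D"
      using i ig by (simp add: Bochner_Integration.integral_diff)
    finally have eq: "?F (z+h) - ?F z - h * ?D = (\<integral>x. g (z+h) x - g z x - h * g' x \<partial>W)" by simp
    have "\<bar>\<integral>x. g (z+h) x - g z x - h * g' x \<partial>W\<bar> \<le> (\<integral>x. \<bar>g (z+h) x - g z x - h * g' x\<bar> \<partial>W)"
      using integral_norm_bound[of W "\<lambda>x. g (z+h) x - g z x - h * g' x"] by simp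
    also have "\<dots> \<le> (\<integral>x. h\<^sup>2 * B x \<partial>W)"
      by (rule integral_mono_AE) (use i2 iB ae in auto)
    also have "\<dots> = h\<^sup>2 * K" unfolding K_def by simp
    finally show ?thesis using eq by simp
  qed
  have "(\<lambda>h. (?F (z + h) - ?F z) / h - ?D) \<midarrow>0\<rightarrow> 0"
  proof (rule Lim_null_comparison)
    show "\<forall>\<^sub>F h in at 0. norm ((?F (z + h) - ?F z) / h - ?D) \<le> \<bar>h\<bar> * K"
      unfolding eventually_at
    proof (intro exI[of _ \<eta>] conjI ballI impI allI)
      fix h :: real assume h: "h \<noteq> 0 \<and> dist h 0 < \<eta>"
      then have "\<bar>h\<bar> < \<eta>" by simp
      from bnd[OF this] have "\<bar>?F (z+h) - ?F z - h * ?D\<bar> \<le> h\<^sup>2 * K" .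
      moreover have "(?F (z + h) - ?F z) / h - ?D = (?F (z+h) - ?F z - h * ?D) / h"
        using h by (simp add: field_simps)
      moreover have "\<bar>(?F (z+h) - ?F z - h * ?D) / h\<bar> = \<bar>?F (z+h) - ?F z - h * ?D\<bar> / \<bar>h\<bar>"
        by (simp add: abs_divide)
      moreover have "h\<^sup>2 * K / \<bar>h\<bar> = \<bar>h\<bar> * K" using h by (cases "h < 0") (auto simp: field_simps power2_eq_square)
      moreover have "\<bar>?F (z+h) - ?F z - h * ?D\<bar> / \<bar>h\<bar> \<le> h\<^sup>2 * K / \<bar>h\<bar>"
        by (rule divide_right_mono) (use calculation in auto)
      ultimately show "norm ((?F (z + h) - ?F z) / h - ?D) \<le> \<bar>h\<bar> * K"
        by (simp only: real_norm_def)
    qed (use eta in auto)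
    show "((\<lambda>h. \<bar>h\<bar> * K) \<longlongrightarrow> 0) (at 0)"
      by (intro tendsto_eq_intros) auto
  qed
  then show ?thesis unfolding DERIV_def LIM_zero_iff .
qed

definition Mk :: "real measure \<Rightarrow> nat \<Rightarrow> real \<Rightarrow> real" where
  "Mk W k z = (\<integral>x. x ^ k * exp (z * x) \<partial>W)"

lemma wd_meas:
  assumes "weight_dist W lam S" and "f \<in> borel_measurable borel"
  shows "f \<in> borel_measurable W"
proof -
  have "sets W = sets borel" using assms(1) unfolding weight_dist_def by auto
  then have eq: "borel_measurable W = borel_measurable borel" by (rule measurable_cong_sets) simp
  show ?thesis unfolding eq by (rule assms(2))
qed


lemma integrable_powexp:
  assumes wd: "weight_dist W lam S" and c: "\<bar>c\<bar> \<le> 3 * lam / 4"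
  shows "integrable W (\<lambda>x. x ^ k * exp (c * x))"
proof (rule Bochner_Integration.integrable_bound[where f="\<lambda>x. fact k * (4 / lam) ^ k * exp (lam * x)"])
  have lam: "0 < lam" and ae: "AE x in W. 0 \<le> x" and ie: "integrable W (\<lambda>x. exp (lam * x))"
    using wd unfolding weight_dist_def by auto
  show "integrable W (\<lambda>x. fact k * (4 / lam) ^ k * exp (lam * x))"
    using ie by simp
  show "(\<lambda>x. x ^ k * exp (c * x)) \<in> borel_measurable W"
    by (rule wd_meas[OF wd]) (intro borel_measurable_continuous_onI continuous_intros)
  show "AE x in W. norm (x ^ k * exp (c * x)) \<le> norm (fact k * (4 / lam) ^ k * exp (lam * x))"
    using ae
  proof eventually_elim
    case (elim x)
    have "(4 / lam) ^ k * (lam * x / 4) ^ k = ((4 / lam) * (lam * x / 4)) ^ k" by (rule power_mult_distrib[symmetric])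
    moreover have "(4 / lam) * (lam * x / 4) = x" using lam by simp
    ultimately have "x ^ k = (4 / lam) ^ k * (lam * x / 4) ^ k" by simp
    also have "\<dots> \<le> (4 / lam) ^ k * (fact k * exp (lam * x / 4))"
      by (rule mult_left_mono[OF pow_le_exp]) (use lam elim in simp_all)
    finally have 1: "x ^ k \<le> (4 / lam) ^ k * (fact k * exp (lam * x / 4))" .
    have "c * x \<le> 3 * lam / 4 * x" using c elim by (intro mult_right_mono) auto
    then have 2: "exp (c * x) \<le> exp (3 * lam / 4 * x)" by simp
    have "x ^ k * exp (c * x) \<le> (4 / lam) ^ k * (fact k * exp (lam * x / 4)) * exp (3 * lam / 4 * x)"
      by (rule mult_mono[OF 1 2]) (use lam in simp_all)
    also have "\<dots> = fact k * (4 / lam) ^ k * (exp (lam * x / 4) * exp (3 * lam / 4 * x))"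
      by (simp only: mult_ac)
    also have "exp (lam * x / 4) * exp (3 * lam / 4 * x) = exp (lam * x / 4 + 3 * lam / 4 * x)"
      by (rule exp_add[symmetric])
    also have "lam * x / 4 + 3 * lam / 4 * x = lam * x" by (simp add: field_simps)
    finally have fin: "x ^ k * exp (c * x) \<le> fact k * (4 / lam) ^ k * exp (lam * x)" .
    have n1: "norm (x ^ k * exp (c * x)) = x ^ k * exp (c * x)" using elim by simp
    have n2: "norm (fact k * (4 / lam) ^ k * exp (lam * x)) = fact k * (4 / lam) ^ k * exp (lam * x)"
      using lam by simp
    show ?case unfolding n1 n2 by (rule fin)
  qed
qed


lemma DERIV_Mk:
  assumes wd: "weight_dist W lam S" and z: "\<bar>z\<bar> < lam / 2"
  shows "(Mk W k has_field_derivative Mk W (Suc k) z) (at z)"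
proof -
  have lam: "0 < lam" and ae: "AE x in W. 0 \<le> x"
    using wd unfolding weight_dist_def by auto
  have "((\<lambda>z. \<integral>x. x ^ k * exp (z * x) \<partial>W) has_field_derivative (\<integral>x. x ^ Suc k * exp (z * x) \<partial>W)) (at z)"
  proof (rule DERIV_integral_bound[where B = "\<lambda>x. x ^ (k+2) * exp (3 * lam / 4 * x)" and \<eta> = "lam / 4"])
    show "integrable W (\<lambda>x. x ^ k * exp (z * x))" by (rule integrable_powexp[OF wd]) (use z in auto)
    show "integrable W (\<lambda>x. x ^ Suc k * exp (z * x))" by (rule integrable_powexp[OF wd]) (use z in auto)
    show "integrable W (\<lambda>x. x ^ (k+2) * exp (3 * lam / 4 * x))" by (rule integrable_powexp[OF wd]) (use lam in auto)
    show "0 < lam / 4" using lam by simp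
    fix h :: real assume h: "\<bar>h\<bar> < lam / 4"
    show "integrable W (\<lambda>x. x ^ k * exp ((z + h) * x)) \<and>
      (AE x in W. \<bar>x ^ k * exp ((z + h) * x) - x ^ k * exp (z * x) - h * (x ^ Suc k * exp (z * x))\<bar>
         \<le> h\<^sup>2 * (x ^ (k + 2) * exp (3 * lam / 4 * x)))"
    proof
      show "integrable W (\<lambda>x. x ^ k * exp ((z + h) * x))" by (rule integrable_powexp[OF wd]) (use z h abs_triangle_ineq[of z h] in linarith)
      show "AE x in W. \<bar>x ^ k * exp ((z + h) * x) - x ^ k * exp (z * x) - h * (x ^ Suc k * exp (z * x))\<bar>
         \<le> h\<^sup>2 * (x ^ (k + 2) * exp (3 * lam / 4 * x))"
        using ae
      proof eventually_elim
        case (elim x)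
        have e1: "exp ((z + h) * x) = exp (z * x) * exp (h * x)"
          by (simp only: distrib_right exp_add)
        have eq: "x ^ k * exp ((z + h) * x) - x ^ k * exp (z * x) - h * (x ^ Suc k * exp (z * x))
            = x ^ k * exp (z * x) * (exp (h * x) - 1 - h * x)"
          unfolding e1 power_Suc by algebra
        have t: "\<bar>exp (h * x) - 1 - h * x\<bar> \<le> (h * x)\<^sup>2 * exp \<bar>h * x\<bar> / 2" by (rule exp_taylor2)
        have "\<bar>x ^ k * exp (z * x) * (exp (h * x) - 1 - h * x)\<bar> = x ^ k * exp (z * x) * \<bar>exp (h * x) - 1 - h * x\<bar>"
          using elim by (simp add: abs_mult)
        also have "\<dots> \<le> x ^ k * exp (z * x) * ((h * x)\<^sup>2 * exp \<bar>h * x\<bar> / 2)"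
          by (rule mult_left_mono[OF t]) (use elim in auto)
        also have "\<dots> = h\<^sup>2 * (x ^ (k + 2) * exp (z * x + \<bar>h\<bar> * x)) / 2"
        proof -
          have a1: "\<bar>h * x\<bar> = \<bar>h\<bar> * x" using elim by (simp add: abs_mult)
          have a2: "exp (z * x + \<bar>h\<bar> * x) = exp (z * x) * exp (\<bar>h\<bar> * x)" by (rule exp_add)
          have a3: "x ^ (k + 2) = x ^ k * x * x" by (simp add: power_add power2_eq_square)
          show ?thesis unfolding a1 a2 a3 power2_eq_square by algebra
        qed
        also have "\<dots> \<le> h\<^sup>2 * (x ^ (k + 2) * exp (3 * lam / 4 * x)) / 2"
        proof -
          have "z * x + \<bar>h\<bar> * x \<le> 3 * lam / 4 * x"
          proof -
            have "z * x \<le> \<bar>z\<bar> * x" using elim by (intro mult_right_mono) auto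
            moreover have "(\<bar>z\<bar> + \<bar>h\<bar>) * x \<le> 3 * lam / 4 * x" using z h elim by (intro mult_right_mono) auto
            ultimately show ?thesis by (simp add: algebra_simps)
          qed
          then show ?thesis using elim by (intro divide_right_mono mult_left_mono) auto
        qed
        also have "\<dots> \<le> h\<^sup>2 * (x ^ (k + 2) * exp (3 * lam / 4 * x))" using elim by simp
        finally show ?case using eq by simp
      qed
    qed
  qed
  then show ?thesis unfolding Mk_def[abs_def] by simp
qed

lemma mgf_bound:
  assumes wd: "weight_dist W lam S" and z: "\<bar>z\<bar> < lam / 2"
  shows "mgf W z \<le> 1 + z + S * z\<^sup>2"
proof -
  have lam: "0 < lam" and ps: "prob_space W" and m1: "(\<integral>x. x \<partial>W) = 1"
    and hyp: "\<And>z. \<bar>z\<bar> < lam / 2 \<Longrightarrow> deriv (deriv (mgf W)) z \<le> 2 * S"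
    using wd unfolding weight_dist_def by auto
  have mgf_eq: "mgf W = Mk W 0" by (rule ext) (simp add: mgf_def Mk_def)
  define I where "I = {- lam / 2 <..< lam / 2}"
  have opI: "open I" unfolding I_def by simp
  have inI: "t \<in> I \<longleftrightarrow> \<bar>t\<bar> < lam / 2" for t unfolding I_def by auto
  have d1: "deriv (mgf W) t = Mk W 1 t" if "t \<in> I" for t
    unfolding mgf_eq using DERIV_Mk[OF wd, of t 0] that inI by (simp add: DERIV_imp_deriv)
  have M2: "Mk W 2 t \<le> 2 * S" if t: "t \<in> I" for t
  proof -
    have "(Mk W 1 has_field_derivative Mk W 2 t) (at t)"
      using DERIV_Mk[OF wd, of t 1] t inI by (simp add: numeral_2_eq_2)
    then have "(deriv (mgf W) has_field_derivative Mk W 2 t) (at t)"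
      by (rule has_field_derivative_transform_within_open[OF _ opI t]) (simp add: d1)
    then have "deriv (deriv (mgf W)) t = Mk W 2 t" by (rule DERIV_imp_deriv)
    then show ?thesis using hyp[of t] t inI by simp
  qed
  have M00: "Mk W 0 0 = 1"
    using ps by (simp add: Mk_def prob_space.prob_space)
  have M10: "Mk W 1 0 = 1"
    using m1 by (simp add: Mk_def)
  define \<phi> where "\<phi> t = 1 + t + S * t\<^sup>2 - Mk W 0 t" for t
  define \<phi>' where "\<phi>' t = 1 + 2 * S * t - Mk W 1 t" for t
  have D\<phi>: "(\<phi> has_real_derivative \<phi>' t) (at t)" if "t \<in> I" for t
  proof -
    have "(Mk W 0 has_field_derivative Mk W 1 t) (at t)"
      using DERIV_Mk[OF wd, of t 0] that inI by simp
    then have "((\<lambda>t. 1 + t + S * t\<^sup>2 - Mk W 0 t) has_real_derivative (1 + 2 * S * t - Mk W 1 t)) (at t)"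
      by (auto intro!: derivative_eq_intros)
    then show ?thesis unfolding \<phi>_def[abs_def] \<phi>'_def by (simp add: algebra_simps)
  qed
  have D\<phi>': "(\<phi>' has_real_derivative (2 * S - Mk W 2 t)) (at t)" if "t \<in> I" for t
  proof -
    have "(Mk W 1 has_field_derivative Mk W 2 t) (at t)"
      using DERIV_Mk[OF wd, of t 1] that inI by (simp add: numeral_2_eq_2)
    then have "((\<lambda>t. 1 + 2 * S * t - Mk W 1 t) has_real_derivative (2 * S - Mk W 2 t)) (at t)"
      by (auto intro!: derivative_eq_intros)
    then show ?thesis unfolding \<phi>'_def[abs_def] by simp
  qed
  have \<phi>'0: "\<phi>' 0 = 0" unfolding \<phi>'_def using M10 by simp
  have \<phi>0: "\<phi> 0 = 0" unfolding \<phi>_def using M00 by simp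
  have "0 \<le> \<phi> z"
  proof (cases "0 \<le> z")
    case True
    have pos: "0 \<le> \<phi>' x" if "0 \<le> x" "x \<le> z" for x
    proof -
      have "\<phi>' 0 \<le> \<phi>' x"
      proof (rule DERIV_nonneg_imp_nondecreasing[OF that(1)])
        fix u assume "0 \<le> u" "u \<le> x"
        then have "u \<in> I" using z that lam inI by auto
        then show "\<exists>y. (\<phi>' has_real_derivative y) (at u) \<and> 0 \<le> y"
          using D\<phi>' M2 by force
      qed
      then show ?thesis using \<phi>'0 by simp
    qed
    have "\<phi> 0 \<le> \<phi> z"
    proof (rule DERIV_nonneg_imp_nondecreasing[OF True])
      fix u assume u: "0 \<le> u" "u \<le> z"
      then have "u \<in> I" using z lam inI by auto
      then show "\<exists>y. (\<phi> has_real_derivative y) (at u) \<and> 0 \<le> y"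
        using D\<phi> pos[OF u] by blast
    qed
    then show ?thesis using \<phi>0 by simp
  next
    case False
    have neg: "\<phi>' x \<le> 0" if "z \<le> x" "x \<le> 0" for x
    proof -
      have "\<phi>' x \<le> \<phi>' 0"
      proof (rule DERIV_nonneg_imp_nondecreasing[OF that(2)])
        fix u assume "x \<le> u" "u \<le> 0"
        then have "u \<in> I" using z that lam inI by auto
        then show "\<exists>y. (\<phi>' has_real_derivative y) (at u) \<and> 0 \<le> y"
          using D\<phi>' M2 by force
      qed
      then show ?thesis using \<phi>'0 by simp
    qed
    have "\<phi> 0 \<le> \<phi> z"
    proof (rule DERIV_nonpos_imp_nonincreasing[of z 0 \<phi>])
      show "z \<le> 0" using False by simp
      fix u assume u: "z \<le> u" "u \<le> 0"
      then have "u \<in> I" using z lam inI by auto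
      then show "\<exists>y. (\<phi> has_real_derivative y) (at u) \<and> y \<le> 0"
        using D\<phi> neg[OF u] by blast
    qed
    then show ?thesis using \<phi>0 by simp
  qed
  then show ?thesis unfolding \<phi>_def mgf_eq by simp
qed



definition yv :: "nat \<Rightarrow> (nat \<Rightarrow> nat) \<Rightarrow> (nat \<Rightarrow> real) \<Rightarrow> nat \<Rightarrow> real" where
  "yv n Ns w i = bin_val Ns w i - (\<Sum>k<n. w k) / real (totN n Ns)"

lemma sum_list_rev_sort: "sum_list (map (g :: real \<Rightarrow> real) (rev (sort L))) = sum_list (map g (L :: real list))"
proof -
  have "mset (map g (rev (sort L))) = mset (map g L)" by simp
  then have "sum_mset (mset (map g (rev (sort L)))) = sum_mset (mset (map g L))" by simp
  then show ?thesis by (simp only: sum_mset_sum_list)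
qed

lemma sum_list_concat_map: "sum_list (map g (concat (map F xs))) = sum_list (map (\<lambda>i. sum_list (map g (F i))) xs)"
  by (induct xs) auto

lemma slot_sum:
  "sum_list (map g (slot_vec n Ns w)) = (\<Sum>i<n. real (Ns i) * g (yv n Ns w i))"
proof -
  have "sum_list (map g (slot_vec n Ns w)) =
     sum_list (map (\<lambda>i. sum_list (map g (replicate (Ns i) (yv n Ns w i)))) [0..<n])"
    unfolding slot_vec_def sum_list_rev_sort sum_list_concat_map yv_def ..
  also have "\<dots> = sum_list (map (\<lambda>i. real (Ns i) * g (yv n Ns w i)) [0..<n])"
    by (simp add: sum_list_replicate)
  also have "\<dots> = (\<Sum>i<n. real (Ns i) * g (yv n Ns w i))"
    by (simp add: interv_sum_list_conv_sum_set_nat atLeast0LessThan)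
  finally show ?thesis .
qed

lemma length_as_sum: "real (length xs) = sum_list (map (\<lambda>_. 1::real) xs)"
  by (induct xs) auto

lemma filter_as_sum: "real (length (filter P xs)) = sum_list (map (\<lambda>x. if P x then 1::real else 0) xs)"
  by (induct xs) auto

lemma length_slot: "real (length (slot_vec n Ns w)) = real (totN n Ns)"
  unfolding length_as_sum slot_sum by (simp add: totN_def)

lemma count_slot: "real (length (filter P (slot_vec n Ns w))) = (\<Sum>i<n. if P (yv n Ns w i) then real (Ns i) else 0)"
  unfolding filter_as_sum slot_sum by (rule sum.cong) auto

lemma slot_desc:
  assumes "k \<le> j" "j < length (slot_vec n Ns w)"
  shows "slot_vec n Ns w ! j \<le> slot_vec n Ns w ! k"
proof -
  let ?L = "sort (concat (map (\<lambda>i. replicate (Ns i)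
        (bin_val Ns w i - (\<Sum>k<n. w k) / real (totN n Ns))) [0..<n]))"
  have s: "sorted ?L" by simp
  have len: "length (slot_vec n Ns w) = length ?L" unfolding slot_vec_def by simp
  have "slot_vec n Ns w ! j = ?L ! (length ?L - Suc j)" unfolding slot_vec_def using assms len by (simp add: rev_nth)
  moreover have "slot_vec n Ns w ! k = ?L ! (length ?L - Suc k)" unfolding slot_vec_def using assms len by (simp add: rev_nth)
  moreover have "?L ! (length ?L - Suc j) \<le> ?L ! (length ?L - Suc k)"
    by (rule sorted_nth_mono[OF s]) (use assms len in auto)
  ultimately show ?thesis by simp
qed

lemma nonneg_few:
  assumes N: "0 < totN n Ns" and neg: "slot_at n Ns w (real (totN n Ns) / 4) < 0"
  shows "(\<Sum>i<n. if 0 \<le> yv n Ns w i then real (Ns i) else 0) < real (totN n Ns) / 4"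
proof -
  let ?xs = "slot_vec n Ns w"
  let ?N = "real (totN n Ns)"
  define K where "K = nat \<lceil>?N / 4\<rceil> - 1"
  have c1: "1 \<le> \<lceil>?N / 4\<rceil>" using N by simp
  have c2: "\<lceil>?N / 4\<rceil> \<le> int (totN n Ns)" by (simp add: ceiling_le_iff)
  have lenx: "length ?xs = totN n Ns" using length_slot[of n Ns w] by simp
  have KN: "K < length ?xs" unfolding K_def lenx using c1 c2 by linarith
  have xK: "?xs ! K < 0" using neg unfolding slot_at_def K_def by simp
  have "{i. i < length ?xs \<and> 0 \<le> ?xs ! i} \<subseteq> {..<K}"
  proof
    fix i assume i: "i \<in> {i. i < length ?xs \<and> 0 \<le> ?xs ! i}"
    show "i \<in> {..<K}"
    proof (rule ccontr)
      assume "i \<notin> {..<K}"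
      then have "?xs ! i \<le> ?xs ! K" using i by (intro slot_desc) auto
      then show False using i xK by auto
    qed
  qed
  then have "card {i. i < length ?xs \<and> 0 \<le> ?xs ! i} \<le> K"
    using card_mono[of "{..<K}"] by fastforce
  then have "length (filter (\<lambda>x. 0 \<le> x) ?xs) \<le> K" by (simp add: length_filter_conv_card)
  moreover have "real K < ?N / 4"
  proof -
    have "real K = real_of_int \<lceil>?N / 4\<rceil> - 1" unfolding K_def using c1 by linarith
    moreover have "real_of_int \<lceil>?N / 4\<rceil> < ?N / 4 + 1" using ceiling_correct[of "?N / 4"] by linarith
    ultimately show ?thesis by linarith
  qed
  ultimately have "real (length (filter (\<lambda>x. 0 \<le> x) ?xs)) < ?N / 4" by linarith
  then show ?thesis unfolding count_slot .
qed



lemma Psi_sum: "Psi a (slot_vec n Ns w) = (\<Sum>i<n. real (Ns i) * exp (- a * yv n Ns w i))"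
  unfolding Psi_def by (rule slot_sum)

lemma Phi_sum: "Phi a (slot_vec n Ns w) = (\<Sum>i<n. real (Ns i) * exp (a * yv n Ns w i))"
  unfolding Phi_def by (rule slot_sum)

lemma sum_upd:
  fixes n i :: nat and w :: "nat \<Rightarrow> real"
  assumes "i < n"
  shows "(\<Sum>k<n. (w(i := w i + \<omega>)) k) = (\<Sum>k<n. w k) + \<omega>"
proof -
  have "(\<Sum>k<n. (w(i := w i + \<omega>)) k) = (\<Sum>k<n. w k + (if k = i then \<omega> else 0))"
    by (rule sum.cong) auto
  also have "\<dots> = (\<Sum>k<n. w k) + (\<Sum>k<n. if k = i then \<omega> else 0)" by (rule sum.distrib)
  also have "(\<Sum>k<n. if k = i then \<omega> else 0) = \<omega>" using sum.delta[of "{..<n}" i "\<lambda>_. \<omega>"] assms by simp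
  finally show ?thesis .
qed

lemma yv_upd:
  fixes n i :: nat and w :: "nat \<Rightarrow> real"
  assumes "i < n"
  shows "yv n Ns (w(i := w i + \<omega>)) l
     = yv n Ns w l - \<omega> / real (totN n Ns) + (if l = i then \<omega> / real (Ns i) else 0)"
  unfolding yv_def bin_val_def sum_upd[OF assms]
  by (auto simp: add_divide_distrib diff_divide_distrib)

lemma Psi_upd:
  fixes n :: nat and Ns :: "nat \<Rightarrow> nat" and w :: "nat \<Rightarrow> real" and a \<omega> :: real
  assumes i: "i < n"
  defines "N \<equiv> real (totN n Ns)"
  defines "f \<equiv> \<lambda>l. exp (- a * yv n Ns w l)"
  shows "Psi a (slot_vec n Ns (w(i := w i + \<omega>))) =
     (Psi a (slot_vec n Ns w) - real (Ns i) * f i) * exp ((a / N) * \<omega>)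
     + real (Ns i) * f i * exp ((a / N - a / real (Ns i)) * \<omega>)"
proof -
  have tm: "real (Ns l) * exp (- a * yv n Ns (w(i := w i + \<omega>)) l) =
     real (Ns l) * f l * exp ((a / N) * \<omega>) +
     (if l = i then real (Ns i) * f i * (exp ((a / N - a / real (Ns i)) * \<omega>) - exp ((a / N) * \<omega>)) else 0)" for l
  proof (cases "l = i")
    case True
    have eq: "- a * yv n Ns (w(i := w i + \<omega>)) l = - a * yv n Ns w i + (a / N - a / real (Ns i)) * \<omega>"
      unfolding yv_upd[OF i] N_def using True by (simp add: algebra_simps)
    have "exp (- a * yv n Ns (w(i := w i + \<omega>)) l) = f i * exp ((a / N - a / real (Ns i)) * \<omega>)"
      unfolding eq f_def by (rule exp_add)
    then show ?thesis using True by (simp add: algebra_simps)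
  next
    case False
    have eq: "- a * yv n Ns (w(i := w i + \<omega>)) l = - a * yv n Ns w l + (a / N) * \<omega>"
      unfolding yv_upd[OF i] N_def using False by (simp add: algebra_simps)
    have "exp (- a * yv n Ns (w(i := w i + \<omega>)) l) = f l * exp ((a / N) * \<omega>)"
      unfolding eq f_def by (rule exp_add)
    then show ?thesis using False by simp
  qed
  have "Psi a (slot_vec n Ns (w(i := w i + \<omega>))) = (\<Sum>l<n. real (Ns l) * exp (- a * yv n Ns (w(i := w i + \<omega>)) l))"
    by (rule Psi_sum)
  also have "\<dots> = (\<Sum>l<n. real (Ns l) * f l * exp ((a / N) * \<omega>) +
     (if l = i then real (Ns i) * f i * (exp ((a / N - a / real (Ns i)) * \<omega>) - exp ((a / N) * \<omega>)) else 0))"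
    by (rule sum.cong[OF refl]) (rule tm)
  also have "\<dots> = (\<Sum>l<n. real (Ns l) * f l) * exp ((a / N) * \<omega>) +
     real (Ns i) * f i * (exp ((a / N - a / real (Ns i)) * \<omega>) - exp ((a / N) * \<omega>))"
    using i by (simp add: sum.distrib sum_distrib_right)
  also have "(\<Sum>l<n. real (Ns l) * f l) = Psi a (slot_vec n Ns w)"
    unfolding Psi_sum f_def ..
  finally have X: "Psi a (slot_vec n Ns (w(i := w i + \<omega>))) = Psi a (slot_vec n Ns w) * exp ((a / N) * \<omega>) +
     real (Ns i) * f i * (exp ((a / N - a / real (Ns i)) * \<omega>) - exp ((a / N) * \<omega>))" .
  show ?thesis unfolding X by (simp add: algebra_simps)
qed

lemma integrable_exp_W:
  assumes wd: "weight_dist W lam S" and c: "\<bar>c\<bar> \<le> 3 * lam / 4"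
  shows "integrable W (\<lambda>x. exp (c * x))"
  using integrable_powexp[OF wd c, of 0] by simp

lemma Ei_bound:
  fixes n i :: nat and Ns :: "nat \<Rightarrow> nat" and w :: "nat \<Rightarrow> real" and a lam S :: real
  assumes wd: "weight_dist W lam S" and a: "0 < a" "a \<le> lam / 2" and Sa: "S * a \<le> 1"
    and i: "i < n" and Nsp: "\<forall>l<n. 0 < Ns l" and N2: "2 \<le> real (totN n Ns)"
  shows "(\<integral>\<omega>. Psi a (slot_vec n Ns (w(i := w i + \<omega>))) \<partial>W) \<le>
     Psi a (slot_vec n Ns w) * (1 + a / real (totN n Ns) + S * (a / real (totN n Ns))\<^sup>2)
     - a * (1 - S * a) * exp (- a * yv n Ns w i)"
proof -
  define N where "N = real (totN n Ns)"
  define f where "f = exp (- a * yv n Ns w i)"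
  define \<Psi> where "\<Psi> = Psi a (slot_vec n Ns w)"
  define m where "m = real (Ns i)"
  define z1 where "z1 = a / N"
  define z2 where "z2 = a / N - a / m"
  define I where "I = (\<integral>\<omega>. Psi a (slot_vec n Ns (w(i := w i + \<omega>))) \<partial>W)"
  have lam: "0 < lam" and S1: "1 \<le> S" using wd unfolding weight_dist_def by auto
  have m1: "1 \<le> m" using Nsp i unfolding m_def by (simp add: Suc_le_eq)
  have mN: "m \<le> N"
  proof -
    have "Ns i \<le> (\<Sum>l<n. Ns l)" by (rule member_le_sum) (use i in auto)
    then show ?thesis unfolding m_def N_def totN_def by linarith
  qed
  have f0: "0 \<le> f" unfolding f_def by simp
  have \<Psi>ge: "m * f \<le> \<Psi>"
  proof -
    have "m * f \<le> (\<Sum>l<n. real (Ns l) * exp (- a * yv n Ns w l))"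
      unfolding m_def f_def by (rule member_le_sum[of i "{..<n}" "\<lambda>l. real (Ns l) * exp (- a * yv n Ns w l)"]) (use i in auto)
    then show ?thesis unfolding \<Psi>_def Psi_sum .
  qed
  have z1b: "\<bar>z1\<bar> < lam / 2" and z1pos: "0 < z1"
  proof -
    have "a / N \<le> a / 2" using N2 a unfolding N_def by (intro divide_left_mono) auto
    then show "\<bar>z1\<bar> < lam / 2" using a lam N2 unfolding z1_def N_def by auto
    show "0 < z1" using a N2 unfolding z1_def N_def by auto
  qed
  have amN: "a / N \<le> a / m" using a m1 mN by (intro divide_left_mono) auto
  have am: "a / m \<le> a" using a m1 by (simp add: divide_le_eq)
  have z2b: "\<bar>z2\<bar> < lam / 2"
  proof -
    have "z2 \<le> 0" using amN unfolding z2_def by simp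
    moreover have "- (lam / 2) < z2" using am z1pos a unfolding z2_def z1_def by linarith
    ultimately show ?thesis by linarith
  qed
  have z2sq: "z2\<^sup>2 \<le> (a / m)\<^sup>2"
  proof -
    have "\<bar>z2\<bar> \<le> a / m" using amN z1pos unfolding z2_def z1_def by auto
    then have "\<bar>z2\<bar>\<^sup>2 \<le> (a / m)\<^sup>2" by (rule power_mono) simp
    then show ?thesis by simp
  qed
  have i1: "integrable W (\<lambda>x. exp (z1 * x))" by (rule integrable_exp_W[OF wd]) (use z1b lam in auto)
  have i2: "integrable W (\<lambda>x. exp (z2 * x))" by (rule integrable_exp_W[OF wd]) (use z2b lam in auto)
  have "I = (\<integral>\<omega>. (\<Psi> - m * f) * exp (z1 * \<omega>) + m * f * exp (z2 * \<omega>) \<partial>W)"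
    unfolding I_def by (rule Bochner_Integration.integral_cong[OF refl])
       (simp add: Psi_upd[OF i] \<Psi>_def m_def f_def z1_def z2_def N_def)
  also have "\<dots> = (\<Psi> - m * f) * mgf W z1 + m * f * mgf W z2"
    using i1 i2 unfolding mgf_def by simp
  also have "\<dots> \<le> (\<Psi> - m * f) * (1 + z1 + S * z1\<^sup>2) + m * f * (1 + z2 + S * z2\<^sup>2)"
  proof (rule add_mono)
    show "(\<Psi> - m * f) * mgf W z1 \<le> (\<Psi> - m * f) * (1 + z1 + S * z1\<^sup>2)"
      by (rule mult_left_mono[OF mgf_bound[OF wd z1b]]) (use \<Psi>ge in simp)
    show "m * f * mgf W z2 \<le> m * f * (1 + z2 + S * z2\<^sup>2)"
      by (rule mult_left_mono[OF mgf_bound[OF wd z2b]]) (use m1 f0 in simp)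
  qed
  also have "\<dots> = \<Psi> * (1 + z1 + S * z1\<^sup>2) + m * f * (z2 - z1) + m * f * S * (z2\<^sup>2 - z1\<^sup>2)"
    by (simp add: algebra_simps)
  also have "m * f * (z2 - z1) = - a * f" unfolding z2_def z1_def using m1 by (simp add: field_simps)
  also have "m * f * S * (z2\<^sup>2 - z1\<^sup>2) \<le> S * a\<^sup>2 * f"
  proof -
    have "m * f * S * (z2\<^sup>2 - z1\<^sup>2) \<le> m * f * S * (a / m)\<^sup>2"
    proof (rule mult_left_mono)
      have "0 \<le> z1\<^sup>2" by simp
      then show "z2\<^sup>2 - z1\<^sup>2 \<le> (a / m)\<^sup>2" using z2sq by linarith
      show "0 \<le> m * f * S" using m1 f0 S1 by simp
    qed
    also have "\<dots> = S * a\<^sup>2 * f / m" using m1 by (simp add: field_simps power2_eq_square)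
    also have "\<dots> \<le> S * a\<^sup>2 * f"
    proof -
      have "0 \<le> S * a\<^sup>2 * f" using f0 S1 by simp
      then show ?thesis using m1 by (simp add: divide_le_eq mult_le_cancel_left1)
    qed
    finally show ?thesis .
  qed
  finally have "I \<le> \<Psi> * (1 + z1 + S * z1\<^sup>2) - a * (1 - S * a) * f"
    by (simp add: algebra_simps power2_eq_square)
  then show ?thesis unfolding \<Psi>_def z1_def N_def f_def I_def .
qed



lemma tie_max:
  assumes tie: "tie_rule n Ns w p" and i: "i < n" and j: "j < n" and a: "0 < a"
  defines "f \<equiv> \<lambda>l. exp (- a * yv n Ns w l)"
  shows "p i j * f i + (1 - p i j) * f j = max (f i) (f j)"
proof -
  have p: "0 \<le> p i j" "p i j \<le> 1"
    "bin_val Ns w i < bin_val Ns w j \<Longrightarrow> p i j = 1"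
    "bin_val Ns w j < bin_val Ns w i \<Longrightarrow> p i j = 0"
    using tie i j unfolding tie_rule_def by auto
  have d: "yv n Ns w i - yv n Ns w j = bin_val Ns w i - bin_val Ns w j" unfolding yv_def by simp
  consider "bin_val Ns w i < bin_val Ns w j" | "bin_val Ns w j < bin_val Ns w i" | "bin_val Ns w i = bin_val Ns w j"
    by linarith
  then show ?thesis
  proof cases
    case 1
    then have "yv n Ns w i < yv n Ns w j" using d by linarith
    then have "f j \<le> f i" unfolding f_def using a by simp
    then show ?thesis using p(3)[OF 1] by simp
  next
    case 2
    then have "yv n Ns w j < yv n Ns w i" using d by linarith
    then have "f i \<le> f j" unfolding f_def using a by simp
    then show ?thesis using p(4)[OF 2] by simp
  next
    case 3
    then have "yv n Ns w j = yv n Ns w i" using d by linarith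
    then have "f i = f j" unfolding f_def by simp
    then show ?thesis by (simp add: algebra_simps)
  qed
qed

lemma exp_next_le:
  fixes f :: "nat \<Rightarrow> real"
  assumes E: "\<And>i. i < n \<Longrightarrow> (\<integral>\<omega>. Psi a (slot_vec n Ns (w(i := w i + \<omega>))) \<partial>W) \<le> U - c * f i"
    and tie: "tie_rule n Ns w p" and c0: "0 \<le> c" and sD: "(\<Sum>i<n. pmf D i) = 1"
    and fdef: "\<And>i. f i = exp (- a * yv n Ns w i)" and a: "0 < a"
  shows "exp_next_Psi a n Ns D W p w \<le> U - c * (\<Sum>i<n. \<Sum>j<n. pmf D i * pmf D j * max (f i) (f j))"
proof -
  have ff: "f = (\<lambda>l. exp (- a * yv n Ns w l))" using fdef by auto
  have "exp_next_Psi a n Ns D W p w \<le> (\<Sum>i<n. \<Sum>j<n. pmf D i * pmf D j * (U - c * max (f i) (f j)))"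
    unfolding exp_next_Psi_def
  proof (intro sum_mono)
    fix i j assume i: "i \<in> {..<n}" and j: "j \<in> {..<n}"
    have p: "0 \<le> p i j" "p i j \<le> 1" using tie i j unfolding tie_rule_def by auto
    let ?Ei = "\<integral>\<omega>. Psi a (slot_vec n Ns (w(i := w i + \<omega>))) \<partial>W"
    let ?Ej = "\<integral>\<omega>. Psi a (slot_vec n Ns (w(j := w j + \<omega>))) \<partial>W"
    have "p i j * ?Ei + (1 - p i j) * ?Ej \<le> p i j * (U - c * f i) + (1 - p i j) * (U - c * f j)"
      using E[of i] E[of j] i j p by (intro add_mono mult_left_mono) auto
    also have "\<dots> = U - c * (p i j * f i + (1 - p i j) * f j)" by (simp add: algebra_simps)
    also have "p i j * f i + (1 - p i j) * f j = max (f i) (f j)"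
      unfolding ff by (rule tie_max[OF tie _ _ a]) (use i j in auto)
    finally have X: "p i j * ?Ei + (1 - p i j) * ?Ej \<le> U - c * max (f i) (f j)" .
    show "pmf D i * pmf D j * (p i j * ?Ei + (1 - p i j) * ?Ej) \<le> pmf D i * pmf D j * (U - c * max (f i) (f j))"
      by (rule mult_left_mono[OF X]) simp
  qed
  also have "\<dots> = U * ((\<Sum>i<n. pmf D i) * (\<Sum>j<n. pmf D j)) - c * (\<Sum>i<n. \<Sum>j<n. pmf D i * pmf D j * max (f i) (f j))"
    by (simp add: sum_product sum_distrib_left sum_subtractf algebra_simps)
  also have "\<dots> = U - c * (\<Sum>i<n. \<Sum>j<n. pmf D i * pmf D j * max (f i) (f j))" using sD by simp
  finally show ?thesis .
qed



lemma R_lower: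
  fixes D ww f :: "nat \<Rightarrow> real" and r \<tau> :: real and n :: nat
  assumes D0: "\<And>i. i < n \<Longrightarrow> 0 \<le> D i" and f0: "\<And>i. i < n \<Longrightarrow> 0 \<le> f i"
    and sD: "(\<Sum>i<n. D i) = 1"
    and Dw: "\<And>i. i < n \<Longrightarrow> r * ww i \<le> D i" and r0: "0 \<le> r" and sw: "(\<Sum>i<n. ww i) = 1"
    and half: "(\<Sum>i<n. if \<tau> < f i then ww i else 0) < 1/2"
  shows "(1 + r/2) * (\<Sum>i<n. if \<tau> < f i then D i * f i else 0) \<le> (\<Sum>i<n. \<Sum>j<n. D i * D j * max (f i) (f j))"
proof -
  define \<phi> where "\<phi> i j = (if \<tau> < f i then f i * (if \<tau> < f j then 1/2 else 1) else 0)" for i j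
  define X where "X = (\<Sum>i<n. if \<tau> < f i then D i * f i else 0)"
  define Y where "Y = (\<Sum>j<n. D j * (if \<tau> < f j then 1/2 else 1))"
  have X0: "0 \<le> X" unfolding X_def by (rule sum_nonneg) (use D0 f0 in auto)
  have pt: "\<phi> i j + \<phi> j i \<le> max (f i) (f j)" if "i < n" "j < n" for i j
    unfolding \<phi>_def using f0[OF that(1)] f0[OF that(2)] by auto
  have "(\<Sum>i<n. \<Sum>j<n. D i * D j * (\<phi> i j + \<phi> j i)) \<le> (\<Sum>i<n. \<Sum>j<n. D i * D j * max (f i) (f j))"
    by (intro sum_mono mult_left_mono) (use pt D0 in auto)
  moreover have "(\<Sum>i<n. \<Sum>j<n. D i * D j * (\<phi> i j + \<phi> j i)) =
      (\<Sum>i<n. \<Sum>j<n. D i * D j * \<phi> i j) + (\<Sum>i<n. \<Sum>j<n. D i * D j * \<phi> j i)"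
    by (simp add: algebra_simps sum.distrib)
  moreover have "(\<Sum>i<n. \<Sum>j<n. D i * D j * \<phi> j i) = (\<Sum>i<n. \<Sum>j<n. D i * D j * \<phi> i j)"
    by (subst sum.swap) (simp add: mult.commute)
  moreover have "(\<Sum>i<n. \<Sum>j<n. D i * D j * \<phi> i j) = X * Y"
    unfolding X_def Y_def sum_product
    by (rule sum.cong[OF refl], rule sum.cong[OF refl]) (simp add: \<phi>_def)
  moreover have "1/2 + r/4 \<le> Y"
  proof -
    have "Y = (\<Sum>j<n. D j) - (\<Sum>j<n. if \<tau> < f j then D j / 2 else 0)"
      unfolding Y_def by (auto simp add: sum_subtractf[symmetric] intro!: sum.cong)
    also have "\<dots> = 1/2 + (1/2) * (\<Sum>j<n. if \<tau> < f j then 0 else D j)"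
    proof -
      have "(\<Sum>j<n. D j) = (\<Sum>j<n. if \<tau> < f j then D j else 0) + (\<Sum>j<n. if \<tau> < f j then 0 else D j)"
        by (auto simp add: sum.distrib[symmetric] intro!: sum.cong)
      moreover have "(\<Sum>j<n. if \<tau> < f j then D j / 2 else 0) = (1/2) * (\<Sum>j<n. if \<tau> < f j then D j else 0)"
        by (auto simp add: sum_distrib_left intro!: sum.cong)
      ultimately show ?thesis using sD by simp
    qed
    finally have Yeq: "Y = 1/2 + (1/2) * (\<Sum>j<n. if \<tau> < f j then 0 else D j)" .
    have L1: "r * (\<Sum>j<n. if \<tau> < f j then 0 else ww j) \<le> (\<Sum>j<n. if \<tau> < f j then 0 else D j)"
      unfolding sum_distrib_left by (intro sum_mono) (use Dw in auto)
    have L2: "(\<Sum>j<n. if \<tau> < f j then 0 else ww j) = 1 - (\<Sum>j<n. if \<tau> < f j then ww j else 0)"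
    proof -
      have "(\<Sum>j<n. ww j) = (\<Sum>j<n. if \<tau> < f j then ww j else 0) + (\<Sum>j<n. if \<tau> < f j then 0 else ww j)"
        by (auto simp add: sum.distrib[symmetric] intro!: sum.cong)
      then show ?thesis using sw by simp
    qed
    have "r * (1/2) \<le> r * (\<Sum>j<n. if \<tau> < f j then 0 else ww j)"
      using L2 half r0 by (intro mult_left_mono) auto
    then show ?thesis using Yeq L1 by linarith
  qed
  ultimately have "2 * (X * Y) \<le> (\<Sum>i<n. \<Sum>j<n. D i * D j * max (f i) (f j))" by linarith
  moreover have "(1 + r/2) * X \<le> 2 * (X * Y)"
  proof -
    have "(1 + r/2) * X = 2 * (X * (1/2 + r/4))" by (simp add: algebra_simps)
    also have "\<dots> \<le> 2 * (X * Y)" using X0 \<open>1/2 + r/4 \<le> Y\<close> by (intro mult_left_mono) auto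
    finally show ?thesis .
  qed
  ultimately show ?thesis unfolding X_def by linarith
qed

lemma X_lower:
  fixes D ww f :: "nat \<Rightarrow> real" and r \<tau> :: real and n :: nat
  assumes Dw: "\<And>i. i < n \<Longrightarrow> r * ww i \<le> D i" and r0: "0 \<le> r" and w0: "\<And>i. i < n \<Longrightarrow> 0 \<le> ww i"
    and f0: "\<And>i. i < n \<Longrightarrow> 0 \<le> f i" and sw: "(\<Sum>i<n. ww i) = 1" and t0: "0 \<le> \<tau>"
  shows "r * ((\<Sum>i<n. ww i * f i) - \<tau>) \<le> (\<Sum>i<n. if \<tau> < f i then D i * f i else 0)"
proof -
  have "(\<Sum>i<n. ww i * f i) \<le> (\<Sum>i<n. (if \<tau> < f i then ww i * f i else 0) + ww i * \<tau>)"
  proof (intro sum_mono)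
    fix i assume i: "i \<in> {..<n}"
    show "ww i * f i \<le> (if \<tau> < f i then ww i * f i else 0) + ww i * \<tau>"
      using w0[of i] f0[of i] i t0 by (auto intro: mult_left_mono)
  qed
  also have "\<dots> = (\<Sum>i<n. if \<tau> < f i then ww i * f i else 0) + \<tau>"
    using sw by (simp add: sum.distrib sum_distrib_right[symmetric])
  finally have 1: "(\<Sum>i<n. ww i * f i) - \<tau> \<le> (\<Sum>i<n. if \<tau> < f i then ww i * f i else 0)" by simp
  have "r * ((\<Sum>i<n. ww i * f i) - \<tau>) \<le> r * (\<Sum>i<n. if \<tau> < f i then ww i * f i else 0)"
    using 1 r0 by (rule mult_left_mono)
  also have "\<dots> \<le> (\<Sum>i<n. if \<tau> < f i then D i * f i else 0)"
    unfolding sum_distrib_left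
  proof (intro sum_mono)
    fix i assume i: "i \<in> {..<n}"
    have "r * (ww i * f i) \<le> D i * f i" using Dw[of i] f0[of i] i by (simp add: mult.assoc[symmetric] mult_right_mono)
    then show "r * (if \<tau> < f i then ww i * f i else 0) \<le> (if \<tau> < f i then D i * f i else 0)" by simp
  qed
  finally show ?thesis .
qed

lemma ex_argmax:
  fixes f :: "nat \<Rightarrow> real"
  assumes "finite A" "A \<noteq> {}"
  shows "\<exists>j\<in>A. \<forall>i\<in>A. f i \<le> f j"
proof -
  have "Max (f ` A) \<in> f ` A" using assms by simp
  then obtain j where j: "j \<in> A" "f j = Max (f ` A)" by auto
  have "\<forall>i\<in>A. f i \<le> f j" using assms j by simp
  then show ?thesis using j by blast
qed

lemma ex_argmin:
  fixes f :: "nat \<Rightarrow> real"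
  assumes "finite A" "A \<noteq> {}"
  shows "\<exists>j\<in>A. \<forall>i\<in>A. f j \<le> f i"
proof -
  have "Min (f ` A) \<in> f ` A" using assms by simp
  then obtain j where j: "j \<in> A" "f j = Min (f ` A)" by auto
  have "\<forall>i\<in>A. f j \<le> f i" using assms j by simp
  then show ?thesis using j by blast
qed

lemma quantile:
  fixes ww f :: "nat \<Rightarrow> real" and n :: nat
  assumes n: "0 < n" and w0: "\<And>i. i < n \<Longrightarrow> 0 \<le> ww i" and sw: "(\<Sum>i<n. ww i) = 1"
  shows "\<exists>k<n. (\<Sum>i<n. if f k < f i then ww i else 0) < 1/2 \<and> 1/2 \<le> (\<Sum>i<n. if f k \<le> f i then ww i else 0)"
proof -
  define C where "C = {k. k < n \<and> (\<Sum>i<n. if f k < f i then ww i else 0) < 1/2}"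
  obtain kmax where km: "kmax \<in> {..<n}" "\<forall>i\<in>{..<n}. f i \<le> f kmax"
    using ex_argmax[of "{..<n}" f] n by auto
  have "(\<Sum>i<n. if f kmax < f i then ww i else 0) = 0"
    by (rule sum.neutral) (use km in force)
  then have "kmax \<in> C" unfolding C_def using km by auto
  then have "C \<noteq> {}" by auto
  moreover have "finite C" unfolding C_def by simp
  ultimately obtain k0 where k0: "k0 \<in> C" "\<forall>k\<in>C. f k0 \<le> f k"
    using ex_argmin[of C f] by auto
  have "1/2 \<le> (\<Sum>i<n. if f k0 \<le> f i then ww i else 0)"
  proof (rule ccontr)
    assume A: "\<not> 1/2 \<le> (\<Sum>i<n. if f k0 \<le> f i then ww i else 0)"
    define L where "L = {i. i < n \<and> f i < f k0}"
    show False
    proof (cases "L = {}")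
      case True
      then have "(\<Sum>i<n. if f k0 \<le> f i then ww i else 0) = (\<Sum>i<n. ww i)"
        unfolding L_def by (intro sum.cong) auto
      then show False using A sw by simp
    next
      case False
      have "finite L" unfolding L_def by simp
      then obtain j where j: "j \<in> L" "\<forall>i\<in>L. f i \<le> f j" using ex_argmax[of L f] False by auto
      have eqs: "(\<Sum>i<n. if f j < f i then ww i else 0) = (\<Sum>i<n. if f k0 \<le> f i then ww i else 0)"
      proof (intro sum.cong refl)
        fix i assume i: "i \<in> {..<n}"
        have "f j < f i \<longleftrightarrow> f k0 \<le> f i"
        proof
          assume "f j < f i"
          then show "f k0 \<le> f i" using j(2) i unfolding L_def by force
        next
          assume "f k0 \<le> f i"
          then show "f j < f i" using j(1) unfolding L_def by simp
        qed
        then show "(if f j < f i then ww i else 0) = (if f k0 \<le> f i then ww i else 0)" by simp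
      qed
      then have "j \<in> C" unfolding C_def using A j(1) unfolding L_def by simp
      then have "f k0 \<le> f j" using k0 by blast
      then show False using j(1) unfolding L_def by simp
    qed
  qed
  then show ?thesis using k0(1) unfolding C_def by blast
qed

lemma Phi_lower:
  fixes ww u :: "nat \<Rightarrow> real" and s :: real and n :: nat
  assumes w0: "\<And>i. i < n \<Longrightarrow> 0 \<le> ww i" and mean: "(\<Sum>i<n. ww i * u i) = 0"
    and few: "(\<Sum>i<n. if 0 \<le> u i then ww i else 0) < 1/4"
    and s: "1/2 \<le> s" and many: "1/2 \<le> (\<Sum>i<n. if u i \<le> - s then ww i else 0)"
  shows "exp (2 * s) / 4 \<le> (\<Sum>i<n. ww i * exp (u i))"
proof -
  define Q where "Q = (\<Sum>i<n. if 0 < u i then ww i * u i else 0)"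
  define p where "p = (\<Sum>i<n. if 0 < u i then ww i else 0)"
  define E where "E = exp (2 * s)"
  have "(\<Sum>i<n. ww i * u i) = Q + (\<Sum>i<n. if 0 < u i then 0 else ww i * u i)"
    unfolding Q_def by (auto simp add: sum.distrib[symmetric] intro!: sum.cong)
  then have Qeq: "Q = (\<Sum>i<n. - (if 0 < u i then 0 else ww i * u i))" using mean by (simp add: sum_negf)
  have "(\<Sum>i<n. if u i \<le> - s then ww i * s else 0) \<le> (\<Sum>i<n. - (if 0 < u i then 0 else ww i * u i))"
  proof (intro sum_mono)
    fix i assume i: "i \<in> {..<n}"
    have wi: "0 \<le> ww i" using w0 i by simp
    show "(if u i \<le> - s then ww i * s else 0) \<le> - (if 0 < u i then 0 else ww i * u i)"
    proof (cases "u i \<le> - s")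
      case True
      then have "ww i * s \<le> ww i * (- u i)" using wi by (intro mult_left_mono) auto
      then show ?thesis using True s by auto
    next
      case False
      then show ?thesis using wi by (auto simp: mult_nonneg_nonpos)
    qed
  qed
  moreover have "(\<Sum>i<n. if u i \<le> - s then ww i * s else 0) = s * (\<Sum>i<n. if u i \<le> - s then ww i else 0)"
    by (auto simp add: sum_distrib_left intro!: sum.cong)
  moreover have "s * (1/2) \<le> s * (\<Sum>i<n. if u i \<le> - s then ww i else 0)"
    using many s by (intro mult_left_mono) auto
  ultimately have Qs: "s / 2 \<le> Q" using Qeq by simp
  have pq: "p \<le> 1/4"
  proof -
    have "p \<le> (\<Sum>i<n. if 0 \<le> u i then ww i else 0)"
      unfolding p_def by (intro sum_mono) (use w0 in auto)
    then show ?thesis using few by simp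
  qed
  have "(\<Sum>i<n. if 0 < u i then ww i * (E * (1 + u i - 2 * s)) else 0) \<le> (\<Sum>i<n. ww i * exp (u i))"
  proof (intro sum_mono)
    fix i assume i: "i \<in> {..<n}"
    have wi: "0 \<le> ww i" using w0 i by simp
    have "E * (1 + u i - 2 * s) \<le> E * exp (u i - 2 * s)"
    proof -
      have "1 + u i - 2 * s \<le> exp (u i - 2 * s)" using exp_ge_add_one_self[of "u i - 2 * s"] by linarith
      then show ?thesis unfolding E_def by (intro mult_left_mono) auto
    qed
    also have "\<dots> = exp (u i)" unfolding E_def by (simp add: exp_diff)
    finally have "ww i * (E * (1 + u i - 2 * s)) \<le> ww i * exp (u i)" using wi by (intro mult_left_mono)
    then show "(if 0 < u i then ww i * (E * (1 + u i - 2 * s)) else 0) \<le> ww i * exp (u i)"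
      using wi by auto
  qed
  moreover have "(\<Sum>i<n. if 0 < u i then ww i * (E * (1 + u i - 2 * s)) else 0) = E * ((1 - 2 * s) * p + Q)"
    unfolding p_def Q_def by (auto simp add: sum_distrib_left sum.distrib[symmetric] algebra_simps intro!: sum.cong)
  moreover have "1/4 \<le> (1 - 2 * s) * p + Q"
  proof -
    have "(1 - 2 * s) * (1/4) \<le> (1 - 2 * s) * p" using s pq by (intro mult_left_mono_neg) auto
    moreover have "(1 - 2 * s) * (1/4) = 1/4 - s/2" by simp
    ultimately have "1/4 - s/2 \<le> (1 - 2 * s) * p" by simp
    then show ?thesis using Qs by linarith
  qed
  moreover have "E / 4 \<le> E * ((1 - 2 * s) * p + Q)"
    using calculation(3) unfolding E_def by simp
  ultimately show ?thesis unfolding E_def by linarith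
qed



lemma main_core:
  fixes \<mu> S a :: real and n :: nat and Ns :: "nat \<Rightarrow> nat" and \<alpha> \<beta> lam :: real
    and D :: "nat pmf" and W :: "real measure" and p :: "nat \<Rightarrow> nat \<Rightarrow> real" and w :: "nat \<Rightarrow> real"
  assumes \<mu>: "0 < \<mu>" and S1: "1 \<le> S" and a: "0 < a" "a \<le> 1 / (100 * S)"
    and n1: "1 \<le> n" and Nsp: "\<forall>i<n. 0 < Ns i" and \<alpha>1: "1 \<le> \<alpha>"
    and bias: "biased n Ns D \<alpha> \<beta>" and \<alpha>\<mu>: "1 / \<alpha>\<^sup>2 \<ge> 4/5 + \<mu>"
    and wd: "weight_dist W lam S" and alam: "a \<le> lam / 2"
    and tie: "tie_rule n Ns w p"
    and slot: "slot_at n Ns w (real (totN n Ns) / 4) < 0"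
    and drift: "exp_next_Psi a n Ns D W p w - Psi a (slot_vec n Ns w)
          \<ge> - (a / (60 * real (totN n Ns))) * Psi a (slot_vec n Ns w)"
    and notsmall: "\<not> Psi a (slot_vec n Ns w) < \<mu> / 6 * Phi a (slot_vec n Ns w)"
  shows "Gamma a (slot_vec n Ns w) < ((1 + 6 / \<mu>) * (24 + 1536 / \<mu>) + 1) * real (totN n Ns)"
proof -
  define N where "N = real (totN n Ns)"
  define y where "y i = yv n Ns w i" for i
  define f where "f i = exp (- a * y i)" for i
  define ww where "ww i = real (Ns i) / N" for i
  define A where "A = (\<Sum>i<n. ww i * f i)"
  define \<Psi> where "\<Psi> = Psi a (slot_vec n Ns w)"
  define \<Phi> where "\<Phi> = Phi a (slot_vec n Ns w)"
  define r where "r = 1 / \<alpha>"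
  have Ns1: "\<And>i. i < n \<Longrightarrow> 1 \<le> real (Ns i)" using Nsp by (simp add: Suc_le_eq)
  have NsumN: "(\<Sum>i<n. real (Ns i)) = N" unfolding N_def totN_def by simp
  have Npos: "0 < N"
  proof -
    have "real (Ns 0) \<le> (\<Sum>i<n. real (Ns i))" by (rule member_le_sum) (use n1 in auto)
    then show ?thesis using Ns1[of 0] n1 NsumN by simp
  qed
  have w0: "\<And>i. i < n \<Longrightarrow> 0 \<le> ww i" unfolding ww_def using Npos by simp
  have sw: "(\<Sum>i<n. ww i) = 1" unfolding ww_def using NsumN Npos by (simp add: sum_divide_distrib[symmetric])
  have f0: "\<And>i. 0 \<le> f i" unfolding f_def by simp
  have \<Psi>eq: "\<Psi> = N * A"
  proof -
    have "\<Psi> = (\<Sum>i<n. real (Ns i) * f i)" unfolding \<Psi>_def Psi_sum f_def y_def ..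
    also have "\<dots> = N * A" unfolding A_def ww_def sum_distrib_left using Npos
      by (intro sum.cong) auto
    finally show ?thesis .
  qed
  have A0: "0 \<le> A" unfolding A_def using w0 f0 by (intro sum_nonneg) (simp add: mult_nonneg_nonneg)
  have \<Phi>eq: "\<Phi> = N * (\<Sum>i<n. ww i * exp (a * y i))"
  proof -
    have "\<Phi> = (\<Sum>i<n. real (Ns i) * exp (a * y i))" unfolding \<Phi>_def Phi_sum y_def ..
    also have "\<dots> = N * (\<Sum>i<n. ww i * exp (a * y i))" unfolding ww_def sum_distrib_left using Npos
      by (intro sum.cong) auto
    finally show ?thesis .
  qed
  have \<Psi>0: "0 \<le> \<Psi>" using \<Psi>eq Npos A0 by simp
  have mean: "(\<Sum>i<n. real (Ns i) * y i) = 0"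
  proof -
    have "(\<Sum>i<n. real (Ns i) * y i) = (\<Sum>i<n. w i - real (Ns i) * ((\<Sum>k<n. w k) / N))"
      unfolding y_def yv_def bin_val_def N_def using Nsp by (intro sum.cong) (auto simp: algebra_simps)
    also have "\<dots> = (\<Sum>k<n. w k) - (\<Sum>i<n. real (Ns i)) * ((\<Sum>k<n. w k) / N)"
      by (simp only: sum_subtractf sum_distrib_right)
    also have "\<dots> = (\<Sum>k<n. w k) - N * ((\<Sum>k<n. w k) / N)" unfolding NsumN ..
    also have "\<dots> = 0" using Npos by simp
    finally show ?thesis .
  qed
  have meanw: "(\<Sum>i<n. ww i * (a * y i)) = 0"
  proof -
    have "(\<Sum>i<n. ww i * (a * y i)) = (a / N) * (\<Sum>i<n. real (Ns i) * y i)"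
      unfolding ww_def sum_distrib_left by (intro sum.cong) auto
    then show ?thesis using mean by simp
  qed
  have fewN: "(\<Sum>i<n. if 0 \<le> y i then real (Ns i) else 0) < N / 4"
    using nonneg_few[OF _ slot] Npos unfolding N_def y_def by simp
  have few: "(\<Sum>i<n. if 0 \<le> a * y i then ww i else 0) < 1/4"
  proof -
    have "(\<Sum>i<n. if 0 \<le> a * y i then ww i else 0) = (\<Sum>i<n. if 0 \<le> y i then real (Ns i) else 0) / N"
      unfolding ww_def sum_divide_distrib using a by (intro sum.cong) (auto simp: zero_le_mult_iff)
    then show ?thesis using fewN Npos by (simp add: divide_less_eq)
  qed
  have N2: "2 \<le> N"
  proof -
    obtain i where i: "i < n" "0 \<le> y i"
    proof (rule ccontr)
      assume "\<not> thesis"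
      then have neg: "\<And>i. i < n \<Longrightarrow> y i < 0" using that by force
      have "(\<Sum>i<n. real (Ns i) * y i) < (\<Sum>i<n. 0)"
      proof (rule sum_strict_mono)
        have "0 \<in> {..<n}" using n1 by simp
        then show "{..<n} \<noteq> {}" by blast
        fix x assume x: "x \<in> {..<n}"
        then have "0 < real (Ns x)" using Nsp by simp
        then show "real (Ns x) * y x < 0" using neg x by (simp add: mult_pos_neg)
      qed simp
      then show False using mean by simp
    qed
    have "real (Ns i) \<le> (\<Sum>i<n. if 0 \<le> y i then real (Ns i) else 0)"
      using member_le_sum[of i "{..<n}" "\<lambda>i. if 0 \<le> y i then real (Ns i) else 0"] i by auto
    then show ?thesis using fewN Ns1[OF i(1)] by linarith
  qed
  have \<alpha>pos: "0 < \<alpha>" using \<alpha>1 by simp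
  have r2: "4/5 \<le> r\<^sup>2" using \<alpha>\<mu> \<mu> unfolding r_def by (simp add: power_one_over)
  have r1: "r \<le> 1" and r0: "0 \<le> r" unfolding r_def using \<alpha>1 by auto
  have rr: "4/5 \<le> r"
  proof -
    have "r\<^sup>2 \<le> r" using r1 r0 by (simp add: power2_eq_square mult_left_le)
    then show ?thesis using r2 by simp
  qed
  have setD: "set_pmf D \<subseteq> {..<n}" using bias unfolding biased_def by auto
  have sD: "(\<Sum>i<n. pmf D i) = 1" by (rule sum_pmf_eq_1) (use setD in auto)
  have Dw: "\<And>i. i < n \<Longrightarrow> r * ww i \<le> pmf D i"
  proof -
    fix i assume i: "i < n"
    have "real (Ns i) / (\<alpha> * real (totN n Ns)) \<le> pmf D i" using bias i unfolding biased_def by auto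
    moreover have "r * ww i = real (Ns i) / (\<alpha> * real (totN n Ns))" unfolding r_def ww_def N_def by simp
    ultimately show "r * ww i \<le> pmf D i" by simp
  qed
  have lam: "0 < lam" using wd unfolding weight_dist_def by auto
  have Sa: "S * a \<le> 1 / 100" using a S1 by (simp add: field_simps)
  have Sa0: "0 \<le> S * a" using a S1 by simp
  define U where "U = \<Psi> * (1 + a / N + S * (a / N)\<^sup>2)"
  define c where "c = a * (1 - S * a)"
  define R where "R = (\<Sum>i<n. \<Sum>j<n. pmf D i * pmf D j * max (f i) (f j))"
  have EN: "exp_next_Psi a n Ns D W p w \<le> U - c * R"
    unfolding R_def
  proof (rule exp_next_le[OF _ tie _ sD _ a(1)])
    fix i assume i: "i < n"
    show "(\<integral>\<omega>. Psi a (slot_vec n Ns (w(i := w i + \<omega>))) \<partial>W) \<le> U - c * f i"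
      using Ei_bound[OF wd a(1) alam _ i Nsp] Sa N2 unfolding U_def c_def \<Psi>_def N_def f_def y_def by simp
  next
    show "0 \<le> c" unfolding c_def using a Sa by simp
  next
    show "f i = exp (- a * yv n Ns w i)" for i unfolding f_def y_def ..
  qed
  obtain k where k: "k < n" "(\<Sum>i<n. if f k < f i then ww i else 0) < 1/2"
     "1/2 \<le> (\<Sum>i<n. if f k \<le> f i then ww i else 0)"
    using quantile[of n ww f] n1 w0 sw by auto
  define \<tau> where "\<tau> = f k"
  have \<tau>pos: "0 < \<tau>" unfolding \<tau>_def f_def by simp
  have Rlow: "(1 + r/2) * (\<Sum>i<n. if \<tau> < f i then pmf D i * f i else 0) \<le> R"
    unfolding R_def by (rule R_lower[OF _ _ sD Dw r0 sw]) (use f0 k(2) \<tau>_def in auto)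
  have Xlow: "r * (A - \<tau>) \<le> (\<Sum>i<n. if \<tau> < f i then pmf D i * f i else 0)"
    unfolding A_def by (rule X_lower[OF Dw r0 w0 _ sw]) (use f0 \<tau>pos in auto)
  have key: "(1 - S * a) * R \<le> A * (1 + S * a / N + 1/60)"
  proof -
    have "c * R \<le> U - \<Psi> + (a / (60 * N)) * \<Psi>" using EN drift unfolding \<Psi>_def N_def by simp
    also have "U - \<Psi> + (a / (60 * N)) * \<Psi> = a * (A * (1 + S * a / N + 1/60))"
      unfolding U_def \<Psi>eq using Npos by (simp add: field_simps power2_eq_square)
    finally have "a * ((1 - S * a) * R) \<le> a * (A * (1 + S * a / N + 1/60))" unfolding c_def by (simp add: mult.assoc)
    then show ?thesis using a(1) by simp
  qed
  have A8: "A \<le> 8 * \<tau>"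
  proof (cases "A \<le> \<tau>")
    case True then show ?thesis using \<tau>pos by simp
  next
    case False
    have R0: "0 \<le> R" unfolding R_def by (intro sum_nonneg) (auto simp: f0 le_max_iff_disj)
    have "(1 + r/2) * (r * (A - \<tau>)) \<le> R"
      using Rlow Xlow r0 by (meson dual_order.trans mult_left_mono add_nonneg_nonneg divide_nonneg_nonneg zero_le_one zero_le_numeral)
    moreover have "(6/5) * (A - \<tau>) \<le> (1 + r/2) * (r * (A - \<tau>))"
    proof -
      have h: "6/5 \<le> (1 + r/2) * r" using rr r2 by (simp add: algebra_simps power2_eq_square)
      have "(6/5) * (A - \<tau>) \<le> ((1 + r/2) * r) * (A - \<tau>)" using h False by (intro mult_right_mono) auto
      then show ?thesis by (simp add: mult.assoc)
    qed
    ultimately have R12: "(6/5) * (A - \<tau>) \<le> R" by linarith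
    have "(99/100) * R \<le> (1 - S * a) * R" using Sa R0 by (intro mult_right_mono) auto
    moreover have "A * (1 + S * a / N + 1/60) \<le> (77/75) * A"
    proof -
      have "S * a / N \<le> S * a" using Sa0 N2 by (simp add: divide_le_eq mult_le_cancel_left1)
      then have "A * (1 + S * a / N + 1/60) \<le> A * (1 + 1/100 + 1/60)" using A0 Sa by (intro mult_left_mono) auto
      then show ?thesis by simp
    qed
    ultimately have "(99/100) * R \<le> (77/75) * A" using key by linarith
    then show ?thesis using R12 \<tau>pos by (simp add: field_simps)
  qed
  have Abound: "A \<le> 24 + 1536 / \<mu>"
  proof (cases "\<tau> \<le> 3")
    case True
    have "0 \<le> 1536 / \<mu>" using \<mu> by simp
    then show ?thesis using A8 True by linarith
  next
    case False
    define s where "s = ln \<tau>"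
    have es: "exp s = \<tau>" unfolding s_def using \<tau>pos by simp
    have s1: "1 \<le> s"
    proof -
      have "exp 1 \<le> exp s" using exp_le False es by linarith
      then show ?thesis by simp
    qed
    have many: "1/2 \<le> (\<Sum>i<n. if a * y i \<le> - s then ww i else 0)"
    proof -
      have "(\<Sum>i<n. if f k \<le> f i then ww i else 0) = (\<Sum>i<n. if a * y i \<le> - s then ww i else 0)"
      proof (intro sum.cong refl)
        fix i
        have "f k \<le> f i \<longleftrightarrow> exp s \<le> exp (- a * y i)" by (simp only: es \<tau>_def f_def)
        also have "\<dots> \<longleftrightarrow> a * y i \<le> - s" by auto
        finally show "(if f k \<le> f i then ww i else 0) = (if a * y i \<le> - s then ww i else 0)" by simp
      qed
      then show ?thesis using k(3) by simp
    qed
    have Pl: "exp (2 * s) / 4 \<le> (\<Sum>i<n. ww i * exp (a * y i))"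
      by (rule Phi_lower[OF w0 meanw few _ many]) (use s1 in auto)
    have e2: "exp (2 * s) = \<tau>\<^sup>2"
    proof -
      have "exp (2 * s) = exp (s + s)" by simp
      also have "\<dots> = exp s * exp s" by (rule exp_add)
      finally show ?thesis using es by (simp add: power2_eq_square)
    qed
    have "\<mu> / 6 * \<Phi> \<le> \<Psi>" using notsmall unfolding \<Psi>_def \<Phi>_def by simp
    moreover have "\<mu> / 6 * (N * (\<tau>\<^sup>2 / 4)) \<le> \<mu> / 6 * \<Phi>"
    proof -
      have "N * (\<tau>\<^sup>2 / 4) \<le> \<Phi>" unfolding \<Phi>eq using Pl e2 Npos by (intro mult_left_mono) auto
      then show ?thesis using \<mu> by (intro mult_left_mono) auto
    qed
    ultimately have "\<mu> / 6 * (N * (\<tau>\<^sup>2 / 4)) \<le> N * A" using \<Psi>eq by linarith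
    then have "\<mu> / 6 * (\<tau>\<^sup>2 / 4) \<le> A" using Npos by (simp add: mult.left_commute)
    then have "\<mu> * \<tau>\<^sup>2 \<le> 24 * (8 * \<tau>)" using A8 by simp
    then have "\<mu> * \<tau> \<le> 192" using \<tau>pos by (simp add: power2_eq_square)
    then have "\<tau> \<le> 192 / \<mu>" using \<mu> by (simp add: field_simps)
    then have "8 * \<tau> \<le> 1536 / \<mu>" by simp
    then show ?thesis using A8 by linarith
  qed
  have "\<mu> / 6 * \<Phi> \<le> \<Psi>" using notsmall unfolding \<Psi>_def \<Phi>_def by simp
  then have \<Phi>le: "\<Phi> \<le> (6 / \<mu>) * \<Psi>" using \<mu> by (simp add: field_simps)
  have "Gamma a (slot_vec n Ns w) = \<Phi> + \<Psi>" unfolding Gamma_def \<Phi>_def \<Psi>_def ..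
  also have "\<dots> \<le> (1 + 6 / \<mu>) * \<Psi>" using \<Phi>le by (simp add: algebra_simps)
  also have "\<dots> = (1 + 6 / \<mu>) * A * N" unfolding \<Psi>eq by simp
  also have "\<dots> \<le> (1 + 6 / \<mu>) * (24 + 1536 / \<mu>) * N"
    using Abound \<mu> Npos by (intro mult_right_mono mult_left_mono) auto
  also have "\<dots> < ((1 + 6 / \<mu>) * (24 + 1536 / \<mu>) + 1) * N" using Npos by (simp add: algebra_simps)
  finally show ?thesis unfolding N_def .
qed


theorem mainTheorem14:
  "\<forall>\<mu>::real. 0 < \<mu> \<longrightarrow>
   (\<exists>c'::real \<Rightarrow> real. \<forall>S::real. 1 \<le> S \<longrightarrow>
    (\<exists>a0::real. 0 < a0 \<and>
     (\<forall>a::real. 0 < a \<and> a \<le> a0 \<longrightarrow>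
      (\<forall>(n::nat) (Ns::nat \<Rightarrow> nat) (\<alpha>::real) (\<beta>::real) (D::nat pmf) (W::real measure)
         (lam::real) (p::nat \<Rightarrow> nat \<Rightarrow> real) (w::nat \<Rightarrow> real).
        1 \<le> n \<and> (\<forall>i<n. 0 < Ns i) \<and> 1 \<le> \<alpha> \<and> 1 \<le> \<beta> \<and>
        biased n Ns D \<alpha> \<beta> \<and> 1 / \<alpha>\<^sup>2 \<ge> 4/5 + \<mu> \<and>
        weight_dist W lam S \<and> a \<le> lam / 2 \<and>
        (\<forall>i<n. 0 \<le> w i) \<and> tie_rule n Ns w p \<and>
        slot_at n Ns w (real (totN n Ns) / 4) < 0 \<and>
        exp_next_Psi a n Ns D W p w - Psi a (slot_vec n Ns w)
          \<ge> - (a / (60 * real (totN n Ns))) * Psi a (slot_vec n Ns w)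
        \<longrightarrow>
        Psi a (slot_vec n Ns w) < \<mu> / 6 * Phi a (slot_vec n Ns w) \<or>
        Gamma a (slot_vec n Ns w) < c' a * real (totN n Ns)))))"
proof (intro allI impI)
  fix \<mu> :: real assume \<mu>: "0 < \<mu>"
  show "\<exists>c'::real \<Rightarrow> real. \<forall>S::real. 1 \<le> S \<longrightarrow>
    (\<exists>a0::real. 0 < a0 \<and>
     (\<forall>a::real. 0 < a \<and> a \<le> a0 \<longrightarrow>
      (\<forall>(n::nat) (Ns::nat \<Rightarrow> nat) (\<alpha>::real) (\<beta>::real) (D::nat pmf) (W::real measure)
         (lam::real) (p::nat \<Rightarrow> nat \<Rightarrow> real) (w::nat \<Rightarrow> real).
        1 \<le> n \<and> (\<forall>i<n. 0 < Ns i) \<and> 1 \<le> \<alpha> \<and> 1 \<le> \<beta> \<and>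
        biased n Ns D \<alpha> \<beta> \<and> 1 / \<alpha>\<^sup>2 \<ge> 4/5 + \<mu> \<and>
        weight_dist W lam S \<and> a \<le> lam / 2 \<and>
        (\<forall>i<n. 0 \<le> w i) \<and> tie_rule n Ns w p \<and>
        slot_at n Ns w (real (totN n Ns) / 4) < 0 \<and>
        exp_next_Psi a n Ns D W p w - Psi a (slot_vec n Ns w)
          \<ge> - (a / (60 * real (totN n Ns))) * Psi a (slot_vec n Ns w)
        \<longrightarrow>
        Psi a (slot_vec n Ns w) < \<mu> / 6 * Phi a (slot_vec n Ns w) \<or>
        Gamma a (slot_vec n Ns w) < c' a * real (totN n Ns))))"
  proof (intro exI[of _ "\<lambda>_::real. (1 + 6 / \<mu>) * (24 + 1536 / \<mu>) + 1"] allI impI)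
    fix S :: real assume S1: "1 \<le> S"
    show "\<exists>a0::real. 0 < a0 \<and>
     (\<forall>a::real. 0 < a \<and> a \<le> a0 \<longrightarrow>
      (\<forall>(n::nat) (Ns::nat \<Rightarrow> nat) (\<alpha>::real) (\<beta>::real) (D::nat pmf) (W::real measure)
         (lam::real) (p::nat \<Rightarrow> nat \<Rightarrow> real) (w::nat \<Rightarrow> real).
        1 \<le> n \<and> (\<forall>i<n. 0 < Ns i) \<and> 1 \<le> \<alpha> \<and> 1 \<le> \<beta> \<and>
        biased n Ns D \<alpha> \<beta> \<and> 1 / \<alpha>\<^sup>2 \<ge> 4/5 + \<mu> \<and>
        weight_dist W lam S \<and> a \<le> lam / 2 \<and>
        (\<forall>i<n. 0 \<le> w i) \<and> tie_rule n Ns w p \<and>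
        slot_at n Ns w (real (totN n Ns) / 4) < 0 \<and>
        exp_next_Psi a n Ns D W p w - Psi a (slot_vec n Ns w)
          \<ge> - (a / (60 * real (totN n Ns))) * Psi a (slot_vec n Ns w)
        \<longrightarrow>
        Psi a (slot_vec n Ns w) < \<mu> / 6 * Phi a (slot_vec n Ns w) \<or>
        Gamma a (slot_vec n Ns w) < ((1 + 6 / \<mu>) * (24 + 1536 / \<mu>) + 1) * real (totN n Ns)))"
    proof (intro exI[of _ "1 / (100 * S)"] conjI allI impI)
      show "0 < 1 / (100 * S)" using S1 by simp
      fix a :: real and n :: nat and Ns :: "nat \<Rightarrow> nat" and \<alpha> \<beta> :: real and D :: "nat pmf"
        and W :: "real measure" and lam :: real and p :: "nat \<Rightarrow> nat \<Rightarrow> real" and w :: "nat \<Rightarrow> real"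
      assume a: "0 < a \<and> a \<le> 1 / (100 * S)"
      assume H: "1 \<le> n \<and> (\<forall>i<n. 0 < Ns i) \<and> 1 \<le> \<alpha> \<and> 1 \<le> \<beta> \<and>
        biased n Ns D \<alpha> \<beta> \<and> 1 / \<alpha>\<^sup>2 \<ge> 4/5 + \<mu> \<and>
        weight_dist W lam S \<and> a \<le> lam / 2 \<and>
        (\<forall>i<n. 0 \<le> w i) \<and> tie_rule n Ns w p \<and>
        slot_at n Ns w (real (totN n Ns) / 4) < 0 \<and>
        exp_next_Psi a n Ns D W p w - Psi a (slot_vec n Ns w)
          \<ge> - (a / (60 * real (totN n Ns))) * Psi a (slot_vec n Ns w)"
      show "Psi a (slot_vec n Ns w) < \<mu> / 6 * Phi a (slot_vec n Ns w) \<or>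
        Gamma a (slot_vec n Ns w) < ((1 + 6 / \<mu>) * (24 + 1536 / \<mu>) + 1) * real (totN n Ns)"
      proof (cases "Psi a (slot_vec n Ns w) < \<mu> / 6 * Phi a (slot_vec n Ns w)")
        case True then show ?thesis by simp
      next
        case False
        have "Gamma a (slot_vec n Ns w) < ((1 + 6 / \<mu>) * (24 + 1536 / \<mu>) + 1) * real (totN n Ns)"
          by (rule main_core[OF \<mu> S1]) (use a H False in auto)
        then show ?thesis by simp
      qed
    qed
  qed
qed

end
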